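(* Let $m\ge1$ and let $n$ be even. Let $P=\bigoplus_{i=1}^n\mathbf{m}$ be the ordinal sum of $n$ antichains each of size $m$. Then the signed cardinality statistic $SC$ is homomesic under rowmotion on $\mathcal{IC}(P)$, with average $0$ on every orbit.
   Context: For posets $P,Q$, the ordinal sum $P\oplus Q$ has underlying set the disjoint union of $P$ and $Q$, with $x\le y$ iff $x\le_P y$, or $x\le_Q y$, or $x\in P$ and $y\in Q$. $\mathbf{m}$ is an $m$-element antichain. $P=\bigoplus_{i=1}^n\mathbf{m}$ is ranked with the elements of the $i$-th summand (counted from the bottom) having rank $i-1$. A subset $I\subseteq P$ is interval-closed if for all $x,y\in I$ and $z\in P$ with $x\le z\le y$ we have $z\in I$; $\mathcal{IC}(P)$ is the set of interval-closed subsets. For $x\in P$ the toggle $t_x$ sends $I$ to $I\triangle\{x\}$ if that is interval-closed and to $I$ otherwise. Rowmotion is $\mathrm{Row}=t_{x_1}\circ\cdots\circ t_{x_N}$, where $(x_1,\dots,x_N)$ is a linear extension of $P$ (toggling from the top down). $SC(x)=1$ if $\mathrm{rk}(x)$ is even and $-1$ if odd, and $SC(I)=\sum_{x\in I}SC(x)$. A statistic is homomesic ($c$-mesic) if its average over every rowmotion orbit equals the same constant $c$. *)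

theory Defs
  imports Complex_Main
begin

definition interval_closed :: "'a set \<Rightarrow> ('a \<Rightarrow> 'a \<Rightarrow> bool) \<Rightarrow> 'a set \<Rightarrow> bool" where
  "interval_closed P le I \<longleftrightarrow> I \<subseteq> P \<and>
     (\<forall>x\<in>I. \<forall>y\<in>I. \<forall>z\<in>P. le x z \<and> le z y \<longrightarrow> z \<in> I)"

definition IC :: "'a set \<Rightarrow> ('a \<Rightarrow> 'a \<Rightarrow> bool) \<Rightarrow> 'a set set" where
  "IC P le = {I. interval_closed P le I}"

definition toggle :: "'a set \<Rightarrow> ('a \<Rightarrow> 'a \<Rightarrow> bool) \<Rightarrow> 'a \<Rightarrow> 'a set \<Rightarrow> 'a set" where
  "toggle P le x I =
     (let J = (I - {x}) \<union> ({x} - I) in if interval_closed P le J then J else I)"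

text \<open>A linear extension, listed from bottom to top.\<close>
definition linear_extension :: "'a set \<Rightarrow> ('a \<Rightarrow> 'a \<Rightarrow> bool) \<Rightarrow> 'a list \<Rightarrow> bool" where
  "linear_extension P le xs \<longleftrightarrow> distinct xs \<and> set xs = P \<and>
     (\<forall>i<length xs. \<forall>j<length xs. le (xs ! i) (xs ! j) \<longrightarrow> i \<le> j)"

text \<open>Row = t_{x_1} \<circ> ... \<circ> t_{x_N} (toggling from the top down).\<close>
definition rowmotion :: "'a set \<Rightarrow> ('a \<Rightarrow> 'a \<Rightarrow> bool) \<Rightarrow> 'a list \<Rightarrow> 'a set \<Rightarrow> 'a set" where
  "rowmotion P le xs = foldr (\<lambda>x f. toggle P le x \<circ> f) xs id"

definition orbit :: "('b \<Rightarrow> 'b) \<Rightarrow> 'b \<Rightarrow> 'b set" where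
  "orbit f I = {(f ^^ k) I | k. True}"

definition homomesic :: "'b set \<Rightarrow> ('b \<Rightarrow> 'b) \<Rightarrow> ('b \<Rightarrow> real) \<Rightarrow> real \<Rightarrow> bool" where
  "homomesic S f stat c \<longleftrightarrow>
     (\<forall>I\<in>S. (\<Sum>J\<in>orbit f I. stat J) / real (card (orbit f I)) = c)"

text \<open>The ordinal sum of n antichains of size m: element (i,j) is the j-th element
  of the (i+1)-th summand from the bottom, so it has rank i.\<close>
definition ordsum_antichains :: "nat \<Rightarrow> nat \<Rightarrow> (nat \<times> nat) set" where
  "ordsum_antichains n m = {0..<n} \<times> {0..<m}"

definition ordsum_le :: "nat \<times> nat \<Rightarrow> nat \<times> nat \<Rightarrow> bool" where
  "ordsum_le x y \<longleftrightarrow> x = y \<or> fst x < fst y"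

definition rk :: "nat \<times> nat \<Rightarrow> nat" where
  "rk x = fst x"

definition SC_elem :: "nat \<times> nat \<Rightarrow> int" where
  "SC_elem x = (if even (rk x) then 1 else -1)"

definition SC :: "(nat \<times> nat) set \<Rightarrow> int" where
  "SC I = (\<Sum>x\<in>I. SC_elem x)"

end

theory Submission
  imports Defs
begin


lemma ic_char:
  "interval_closed P ordsum_le I \<longleftrightarrow> I \<subseteq> P \<and>
     (\<forall>x\<in>I. \<forall>y\<in>I. \<forall>z\<in>P. fst x < fst z \<and> fst z < fst y \<longrightarrow> z \<in> I)"
  unfolding interval_closed_def ordsum_le_def by blast

lemma toggle_IC: "I \<in> IC P le \<Longrightarrow> toggle P le x I \<in> IC P le"
  by (simp add: toggle_def IC_def Let_def)

lemma toggle_invol: "I \<in> IC P le \<Longrightarrow> toggle P le x (toggle P le x I) = I"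
proof -
  assume I: "I \<in> IC P le"
  have e: "(I - {x} \<union> ({x} - I)) - {x} \<union> ({x} - (I - {x} \<union> ({x} - I))) = I" by auto
  show ?thesis
  proof (cases "interval_closed P le (I - {x} \<union> ({x} - I))")
    case True
    then show ?thesis using I e by (simp add: toggle_def Let_def IC_def)
  next
    case False
    then show ?thesis by (simp add: toggle_def Let_def)
  qed
qed

lemma foldr_toggle_IC_inj:
  "(\<forall>I\<in>IC P le. foldr (\<lambda>x f. toggle P le x \<circ> f) ys id I \<in> IC P le) \<and>
   inj_on (foldr (\<lambda>x f. toggle P le x \<circ> f) ys id) (IC P le)"
proof (induction ys)
  case Nil
  then show ?case by simp
next
  case (Cons a ys)
  let ?f = "foldr (\<lambda>x f. toggle P le x \<circ> f) ys id"
  have inj_t: "inj_on (toggle P le a) (IC P le)"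
    by (rule inj_on_inverseI[where g="toggle P le a"]) (rule toggle_invol)
  have A: "inj_on (toggle P le a \<circ> ?f) (IC P le)"
    apply (rule comp_inj_on)
    using Cons apply blast
    using Cons inj_t by (meson image_subsetI inj_on_subset)
  have B: "\<forall>I\<in>IC P le. (toggle P le a \<circ> ?f) I \<in> IC P le"
  proof
    fix I assume "I \<in> IC P le"
    then have "?f I \<in> IC P le" using Cons by blast
    then show "(toggle P le a \<circ> ?f) I \<in> IC P le" unfolding comp_apply by (rule toggle_IC)
  qed
  have eq: "foldr (\<lambda>x f. toggle P le x \<circ> f) (a#ys) id = toggle P le a \<circ> ?f" by simp
  show ?case unfolding eq using A B by blast
qed

lemma toggle_other: "y \<noteq> x \<Longrightarrow> y \<in> toggle P le x J \<longleftrightarrow> y \<in> J"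
  by (auto simp: toggle_def Let_def)

definition tm :: "(nat\<times>nat) set \<Rightarrow> (nat\<times>nat) set \<Rightarrow> nat\<times>nat \<Rightarrow> bool" where
  "tm P J x = (if x \<in> J then (\<exists>a\<in>J. \<exists>b\<in>J. fst a < fst x \<and> fst x < fst b)
     else (\<forall>b\<in>J. \<forall>z\<in>P. (fst x < fst z \<and> fst z < fst b \<longrightarrow> z \<in> J) \<and>
                         (fst b < fst z \<and> fst z < fst x \<longrightarrow> z \<in> J)))"

lemma toggle_mem:
  assumes J: "J \<in> IC P ordsum_le" and x: "x \<in> P"
  shows "x \<in> toggle P ordsum_le x J \<longleftrightarrow> tm P J x"
proof -
  have JP: "J \<subseteq> P" and Jc: "\<And>a b z. a\<in>J \<Longrightarrow> b\<in>J \<Longrightarrow> z\<in>P \<Longrightarrow> fst a < fst z \<Longrightarrow> fst z < fst b \<Longrightarrow> z\<in>J"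
    using J unfolding IC_def ic_char by blast+
  show ?thesis
  proof (cases "x \<in> J")
    case True
    have "interval_closed P ordsum_le (J - {x}) \<longleftrightarrow> \<not> (\<exists>a\<in>J. \<exists>b\<in>J. fst a < fst x \<and> fst x < fst b)"
    proof
      assume ic: "interval_closed P ordsum_le (J - {x})"
      show "\<not> (\<exists>a\<in>J. \<exists>b\<in>J. fst a < fst x \<and> fst x < fst b)"
      proof
        assume "\<exists>a\<in>J. \<exists>b\<in>J. fst a < fst x \<and> fst x < fst b"
        then obtain a b where ab: "a\<in>J" "b\<in>J" "fst a < fst x" "fst x < fst b" by blast
        then have "a \<in> J - {x}" "b \<in> J - {x}" by auto
        then have "x \<in> J - {x}" using ic x ab unfolding ic_char by blast
        then show False by simp
      qed
    next
      assume n: "\<not> (\<exists>a\<in>J. \<exists>b\<in>J. fst a < fst x \<and> fst x < fst b)"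
      show "interval_closed P ordsum_le (J - {x})"
        unfolding ic_char
      proof (intro conjI ballI impI)
        show "J - {x} \<subseteq> P" using JP by blast
      next
        fix a b z assume "a \<in> J - {x}" "b \<in> J - {x}" "z \<in> P" "fst a < fst z \<and> fst z < fst b"
        then show "z \<in> J - {x}" using Jc n by blast
      qed
    qed
    moreover have eq: "J - {x} \<union> ({x} - J) = J - {x}" using True by auto
    have "toggle P ordsum_le x J = (if interval_closed P ordsum_le (J - {x}) then J - {x} else J)"
      unfolding toggle_def Let_def eq by simp
    then have "x \<in> toggle P ordsum_le x J \<longleftrightarrow> \<not> interval_closed P ordsum_le (J - {x})"
      using True by simp
    ultimately show ?thesis using True unfolding tm_def by simp
  next
    case False
    have "interval_closed P ordsum_le (J \<union> {x}) \<longleftrightarrow> (\<forall>b\<in>J. \<forall>z\<in>P. (fst x < fst z \<and> fst z < fst b \<longrightarrow> z \<in> J) \<and>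
                           (fst b < fst z \<and> fst z < fst x \<longrightarrow> z \<in> J))" (is "_ \<longleftrightarrow> ?R")
    proof
      assume ic: "interval_closed P ordsum_le (J \<union> {x})"
      then have c: "\<And>a b z. a\<in>J \<union> {x} \<Longrightarrow> b\<in>J \<union> {x} \<Longrightarrow> z\<in>P \<Longrightarrow> fst a < fst z \<Longrightarrow> fst z < fst b \<Longrightarrow> z\<in>J \<union> {x}"
        unfolding ic_char by blast
      show ?R
      proof (intro ballI conjI impI)
        fix b z assume "b \<in> J" "z \<in> P" "fst x < fst z \<and> fst z < fst b"
        then show "z \<in> J" using c[of x b z] by auto
      next
        fix b z assume "b \<in> J" "z \<in> P" "fst b < fst z \<and> fst z < fst x"
        then show "z \<in> J" using c[of b x z] by auto
      qed
    next
      assume R: ?R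
      show "interval_closed P ordsum_le (J \<union> {x})"
        unfolding ic_char
      proof (intro conjI ballI impI)
        show "J \<union> {x} \<subseteq> P" using JP x by blast
      next
        fix a b z assume a: "a \<in> J \<union> {x}" and b: "b \<in> J \<union> {x}" and z: "z \<in> P" and o: "fst a < fst z \<and> fst z < fst b"
        show "z \<in> J \<union> {x}"
        proof (cases "a = x")
          case True
          then have "b \<noteq> x" using o by auto
          then have "b \<in> J" using b by blast
          then have "z \<in> J" using R z o True by blast
          then show ?thesis by blast
        next
          case na: False
          show ?thesis
          proof (cases "b = x")
            case True
            then have "a \<in> J" using a na by blast
            then have "z \<in> J" using R z o True by blast
            then show ?thesis by blast
          next
            case False
            then have "a \<in> J" "b \<in> J" using a b na by blast+
            then have "z \<in> J" using Jc z o by blast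
            then show ?thesis by blast
          qed
        qed
      qed
    qed
    moreover have eq: "J - {x} \<union> ({x} - J) = J \<union> {x}" using False by auto
    have "toggle P ordsum_le x J = (if interval_closed P ordsum_le (J \<union> {x}) then J \<union> {x} else J)"
      unfolding toggle_def Let_def eq by simp
    then have "x \<in> toggle P ordsum_le x J \<longleftrightarrow> interval_closed P ordsum_le (J \<union> {x})"
      using False by simp
    ultimately show ?thesis using False unfolding tm_def by simp
  qed
qed

lemma tm_cong:
  assumes "x \<in> J \<longleftrightarrow> x \<in> J'" and "\<And>y. fst y \<noteq> fst x \<Longrightarrow> (y \<in> J \<longleftrightarrow> y \<in> J')"
  shows "tm P J x = tm P J' x"
proof -
  have e1: "(\<exists>a\<in>J. \<exists>b\<in>J. fst a < fst x \<and> fst x < fst b) = (\<exists>a\<in>J'. \<exists>b\<in>J'. fst a < fst x \<and> fst x < fst b)"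
    using assms(2) by (metis less_irrefl)
  have e2: "(\<forall>b\<in>J. \<forall>z\<in>P. (fst x < fst z \<and> fst z < fst b \<longrightarrow> z \<in> J) \<and>
                         (fst b < fst z \<and> fst z < fst x \<longrightarrow> z \<in> J)) =
            (\<forall>b\<in>J'. \<forall>z\<in>P. (fst x < fst z \<and> fst z < fst b \<longrightarrow> z \<in> J') \<and>
                         (fst b < fst z \<and> fst z < fst x \<longrightarrow> z \<in> J'))"
  proof -
    have key: "\<And>b z. (fst x < fst z \<and> fst z < fst b) \<or> (fst b < fst z \<and> fst z < fst x) \<Longrightarrow>
        (b\<in>J \<longleftrightarrow> b\<in>J') \<and> (z\<in>J \<longleftrightarrow> z\<in>J')"
      using assms(2) by (metis less_irrefl less_trans)
    show ?thesis using key by blast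
  qed
  show ?thesis unfolding tm_def using assms(1) e1 e2 by simp
qed

lemma row_char:
  assumes le: "linear_extension P ordsum_le xs" and I: "I \<in> IC P ordsum_le" and x: "x \<in> P"
  shows "x \<in> rowmotion P ordsum_le xs I \<longleftrightarrow>
    tm P ({y \<in> rowmotion P ordsum_le xs I. fst y > fst x} \<union> {y\<in>I. fst y \<le> fst x}) x"
proof -
  define N where "N = length xs"
  define R where "R k = foldr (\<lambda>x f. toggle P ordsum_le x \<circ> f) (drop k xs) id I" for k
  have dist: "distinct xs" and setxs: "set xs = P"
    and ord: "\<And>i j. i < N \<Longrightarrow> j < N \<Longrightarrow> ordsum_le (xs!i) (xs!j) \<Longrightarrow> i \<le> j"
    using le unfolding linear_extension_def N_def by auto
  have R0: "R 0 = rowmotion P ordsum_le xs I" by (simp add: R_def rowmotion_def)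
  have RN: "R N = I" by (simp add: R_def N_def)
  have Rstep: "R k = toggle P ordsum_le (xs!k) (R (Suc k))" if "k < N" for k
  proof -
    have "drop k xs = xs!k # drop (Suc k) xs" using that by (simp add: N_def Cons_nth_drop_Suc)
    then show ?thesis unfolding R_def by simp
  qed
  have RIC: "R k \<in> IC P ordsum_le" if "k \<le> N" for k
    using that
  proof (induction k rule: inc_induct)
    case base then show ?case using RN I by simp
  next
    case (step k)
    have "R k = toggle P ordsum_le (xs!k) (R (Suc k))" using Rstep step.hyps by simp
    then show ?case using toggle_IC step.IH by simp
  qed
  have A: "i < k \<longrightarrow> (xs!i \<in> R k \<longleftrightarrow> xs!i \<in> I)" if "k \<le> N" for i k
    using that
  proof (induction k rule: inc_induct)
    case base then show ?case using RN by simp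
  next
    case (step k)
    show ?case
    proof
      assume ik: "i < k"
      have "k < length xs" "i < length xs" using step.hyps ik by (auto simp: N_def)
      then have "xs!i \<noteq> xs!k" using ik by (simp add: nth_eq_iff_index_eq[OF dist])
      then have "xs!i \<in> R k \<longleftrightarrow> xs!i \<in> R (Suc k)" using Rstep[OF step.hyps(2)] toggle_other by simp
      then show "xs!i \<in> R k \<longleftrightarrow> xs!i \<in> I" using step.IH ik by simp
    qed
  qed
  have B: "k \<le> i \<longrightarrow> (xs!i \<in> R k \<longleftrightarrow> xs!i \<in> R i)" if "i < N" for i k
  proof (cases "k \<le> i")
    case True
    show ?thesis using True
    proof (induction k rule: inc_induct)
      case base then show ?case by simp
    next
      case (step k)
      have kl: "k < length xs" "i < length xs" using step.hyps that by (auto simp: N_def)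
      then have "xs!i \<noteq> xs!k" using step.hyps by (simp add: nth_eq_iff_index_eq[OF dist])
      moreover have "k < N" using kl by (simp add: N_def)
      ultimately have "xs!i \<in> R k \<longleftrightarrow> xs!i \<in> R (Suc k)" using Rstep toggle_other by simp
      then show ?case using step.IH step.hyps by simp
    qed
  qed simp
  obtain i where i: "i < N" "x = xs!i" using x setxs by (metis in_set_conv_nth N_def)
  have RP: "R k \<subseteq> P" if "k \<le> N" for k using RIC[OF that] unfolding IC_def ic_char by blast
  have IP: "I \<subseteq> P" using I unfolding IC_def ic_char by blast
  have "x \<in> R 0 \<longleftrightarrow> x \<in> R i" using B[OF i(1), of 0] i by simp
  also have "\<dots> \<longleftrightarrow> x \<in> toggle P ordsum_le x (R (Suc i))" using Rstep i by simp
  also have "\<dots> \<longleftrightarrow> tm P (R (Suc i)) x" using toggle_mem RIC i x by simp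
  also have "\<dots> \<longleftrightarrow> tm P ({y \<in> R 0. fst y > fst x} \<union> {y\<in>I. fst y \<le> fst x}) x"
  proof (rule tm_cong)
    show "x \<in> R (Suc i) \<longleftrightarrow> x \<in> {y \<in> R 0. fst y > fst x} \<union> {y\<in>I. fst y \<le> fst x}"
      using A[of "Suc i" i] i by simp
  next
    fix y :: "nat \<times> nat" assume fy: "fst y \<noteq> fst x"
    show "y \<in> R (Suc i) \<longleftrightarrow> y \<in> {y \<in> R 0. fst y > fst x} \<union> {y\<in>I. fst y \<le> fst x}"
    proof (cases "y \<in> P")
      case False
      moreover have "R (Suc i) \<subseteq> P" "R 0 \<subseteq> P" using RP i by simp_all
      ultimately show ?thesis using IP by blast
    next
      case True
      then obtain k where k: "k < N" "y = xs!k" using setxs by (metis in_set_conv_nth N_def)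
      show ?thesis
      proof (cases "fst y > fst x")
        case True
        then have "ordsum_le x y" by (simp add: ordsum_le_def)
        then have "i \<le> k" using ord i k by simp
        moreover have "i \<noteq> k" using fy i k by auto
        ultimately have "Suc i \<le> k" by simp
        then have "y \<in> R (Suc i) \<longleftrightarrow> y \<in> R k" "y \<in> R 0 \<longleftrightarrow> y \<in> R k"
          using B[OF k(1), of "Suc i"] B[OF k(1), of 0] k(2) by simp_all
        then show ?thesis using True by simp
      next
        case False
        then have lt: "fst y < fst x" using fy by simp
        then have "ordsum_le y x" by (simp add: ordsum_le_def)
        then have "k \<le> i" using ord i k by simp
        moreover have "i \<noteq> k" using fy i k by auto
        ultimately have "k < Suc i" by simp
        then have "y \<in> R (Suc i) \<longleftrightarrow> y \<in> I" using A[of "Suc i" k] i k by simp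
        then show ?thesis using lt by simp
      qed
    qed
  qed
  finally show ?thesis using R0 by simp
qed

lemma char_unique:
  assumes "R1 \<subseteq> P" "R2 \<subseteq> P" "I \<subseteq> P" and bnd: "\<forall>x\<in>P. fst x < n"
    and c1: "\<forall>x\<in>P. x\<in>R1 \<longleftrightarrow> tm P ({y\<in>R1. fst y > fst x} \<union> {y\<in>I. fst y \<le> fst x}) x"
    and c2: "\<forall>x\<in>P. x\<in>R2 \<longleftrightarrow> tm P ({y\<in>R2. fst y > fst x} \<union> {y\<in>I. fst y \<le> fst x}) x"
  shows "R1 = R2"
proof -
  have "x \<in> P \<longrightarrow> (x \<in> R1 \<longleftrightarrow> x \<in> R2)" for x
  proof (induction "n - fst x" arbitrary: x rule: less_induct)
    case less
    show ?case
    proof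
      assume xP: "x \<in> P"
      have "{y\<in>R1. fst y > fst x} = {y\<in>R2. fst y > fst x}"
      proof (intro set_eqI iffI)
        fix y assume "y \<in> {y\<in>R1. fst y > fst x}"
        moreover then have "y \<in> P" using assms by auto
        moreover have "n - fst y < n - fst x" using calculation bnd xP by fastforce
        ultimately show "y \<in> {y\<in>R2. fst y > fst x}" using less by blast
      next
        fix y assume "y \<in> {y\<in>R2. fst y > fst x}"
        moreover then have "y \<in> P" using assms by auto
        moreover have "n - fst y < n - fst x" using calculation bnd xP by fastforce
        ultimately show "y \<in> {y\<in>R1. fst y > fst x}" using less by blast
      qed
      then show "x \<in> R1 \<longleftrightarrow> x \<in> R2" using c1 c2 xP by simp
    qed
  qed
  then show ?thesis using assms by blast
qed



lemma tm_in: "x\<in>J \<Longrightarrow> tm P J x \<longleftrightarrow> (\<exists>a\<in>J. \<exists>b\<in>J. fst a < fst x \<and> fst x < fst b)"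
  unfolding tm_def by simp

lemma tm_out: "x\<notin>J \<Longrightarrow> tm P J x \<longleftrightarrow> (\<forall>b\<in>J. \<forall>z\<in>P. (fst x < fst z \<and> fst z < fst b \<longrightarrow> z \<in> J) \<and>
                         (fst b < fst z \<and> fst z < fst x \<longrightarrow> z \<in> J))"
  unfolding tm_def by simp

lemma tm_in_true: "x\<in>J \<Longrightarrow> a\<in>J \<Longrightarrow> b\<in>J \<Longrightarrow> fst a < fst x \<Longrightarrow> fst x < fst b \<Longrightarrow> tm P J x"
  using tm_in by blast

lemma tm_in_nobelow: "x\<in>J \<Longrightarrow> (\<And>a. a\<in>J \<Longrightarrow> fst a < fst x \<Longrightarrow> False) \<Longrightarrow> \<not> tm P J x"
  using tm_in by blast

lemma tm_in_noabove: "x\<in>J \<Longrightarrow> (\<And>b. b\<in>J \<Longrightarrow> fst x < fst b \<Longrightarrow> False) \<Longrightarrow> \<not> tm P J x"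
  using tm_in by blast

lemma tm_out_false: "x\<notin>J \<Longrightarrow> b\<in>J \<Longrightarrow> z\<in>P \<Longrightarrow> z\<notin>J \<Longrightarrow>
   (fst x<fst z \<and> fst z<fst b) \<or> (fst b<fst z \<and> fst z<fst x) \<Longrightarrow> \<not> tm P J x"
  using tm_out by blast

lemma tm_out_true: "x\<notin>J \<Longrightarrow> (\<And>b z. b\<in>J \<Longrightarrow> z\<in>P \<Longrightarrow> fst x<fst z \<Longrightarrow> fst z<fst b \<Longrightarrow> z\<in>J)
   \<Longrightarrow> (\<And>b z. b\<in>J \<Longrightarrow> z\<in>P \<Longrightarrow> fst b<fst z \<Longrightarrow> fst z<fst x \<Longrightarrow> z\<in>J) \<Longrightarrow> tm P J x"
  using tm_out by blast

lemma memP: "z \<in> ordsum_antichains n m \<longleftrightarrow> fst z < n \<and> snd z < m"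
  by (cases z) (simp add: ordsum_antichains_def)

lemma case0:
  fixes P :: "(nat\<times>nat) set"
  shows "\<forall>x\<in>P. x\<in>P \<longleftrightarrow> tm P ({y\<in>P. fst y > fst x} \<union> {y\<in>{}. fst y \<le> fst x}) x"
proof
  fix x assume x: "x \<in> P"
  let ?H = "{y\<in>P. fst y > fst x} \<union> {y\<in>{}. fst y \<le> fst x}"
  have "tm P ?H x"
  proof (rule tm_out_true)
    show "x \<notin> ?H" by simp
  next
    fix b z assume "b \<in> ?H" "z \<in> P" "fst x < fst z" "fst z < fst b"
    then show "z \<in> ?H" by simp
  next
    fix b z assume "b \<in> ?H" "z \<in> P" "fst b < fst z" "fst z < fst x"
    then show "z \<in> ?H" by simp
  qed
  then show "x\<in>P \<longleftrightarrow> tm P ?H x" using x by simp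
qed

lemma case1:
  fixes P I :: "(nat\<times>nat) set" and lo hi n m :: nat and a0 :: "nat\<times>nat"
  assumes P: "P = ordsum_antichains n m" and IP: "I \<subseteq> P"
    and a0: "a0 \<in> I" "fst a0 = lo"
    and rng: "\<And>z. z\<in>I \<Longrightarrow> lo \<le> fst z \<and> fst z \<le> hi"
    and T1: "\<And>z. z\<in>P \<Longrightarrow> lo < fst z \<Longrightarrow> fst z \<le> hi \<Longrightarrow> z\<in>I"
    and hs: "Suc hi < n"
    and F: "F = {z\<in>P. fst z = lo \<and> z\<notin>I} \<union> {z\<in>P. lo < fst z \<and> fst z \<le> Suc hi}"
  shows "\<forall>x\<in>P. x\<in>F \<longleftrightarrow> tm P ({y\<in>F. fst y > fst x} \<union> {y\<in>I. fst y \<le> fst x}) x"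
proof
  fix x assume xP: "x \<in> P"
  define H where "H = {y\<in>F. fst y > fst x} \<union> {y\<in>I. fst y \<le> fst x}"
  have memH: "y\<in>H \<longleftrightarrow> (y\<in>F \<and> fst y > fst x) \<or> (y\<in>I \<and> fst y \<le> fst x)" for y
    by (simp add: H_def)
  have memF: "y\<in>F \<longleftrightarrow> y\<in>P \<and> ((fst y = lo \<and> y\<notin>I) \<or> (lo<fst y \<and> fst y \<le> Suc hi))" for y
    by (simp add: F) blast
  have a0P: "a0 \<in> P" using a0 IP by blast
  have lohi: "lo \<le> hi" using rng[OF a0(1)] by simp
  define w where "w = (Suc hi, 0::nat)"
  have wP: "w \<in> P" using a0P hs by (simp add: P memP w_def)
  have wnI: "w \<notin> I" using rng[of w] by (auto simp: w_def)
  have wF: "w \<in> F" using wP lohi by (simp add: memF w_def)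
  have Fle: "fst y \<le> Suc hi" if "y \<in> F" for y using that lohi by (auto simp: memF)
  have Fge: "lo \<le> fst y" if "y \<in> F" for y using that by (auto simp: memF)
  have Hle: "fst y \<le> Suc hi" if "y \<in> H" for y using that Fle[of y] rng[of y] by (auto simp: memH)
  have Hge: "lo \<le> fst y" if "y \<in> H" for y using that Fge[of y] rng[of y] by (auto simp: memH)
  show "x\<in>F \<longleftrightarrow> tm P H x"
  proof (cases "Suc hi < fst x")
    case True
    have xF: "x \<notin> F" using True Fle by fastforce
    have xI: "x \<notin> I" using True rng by fastforce
    have xH: "x \<notin> H" using xF xI by (simp add: memH)
    have "\<not> tm P H x"
      apply (rule tm_out_false[OF xH, of a0 w])
      using a0 True wP wnI lohi by (auto simp: memH w_def)
    then show ?thesis using xF by simp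
  next
    case c1: False
    show ?thesis
    proof (cases "fst x = Suc hi")
      case True
      have xF: "x \<in> F" using True xP lohi by (simp add: memF)
      have xI: "x \<notin> I" using True rng by fastforce
      have xH: "x \<notin> H" using xI True by (simp add: memH)
      have "tm P H x"
      proof (rule tm_out_true[OF xH])
        fix b z assume "b\<in>H" "z\<in>P" "fst x<fst z" "fst z<fst b"
        then show "z \<in> H" using Hle True by fastforce
      next
        fix b z assume b: "b\<in>H" and z: "z\<in>P" "fst b<fst z" "fst z<fst x"
        have "b \<in> I" using b True Fle[of b] by (auto simp: memH)
        then have "lo \<le> fst b" using rng by blast
        then have "z \<in> I" using T1 z True by simp
        then show "z \<in> H" using z by (simp add: memH)
      qed
      then show ?thesis using xF by simp
    next
      case c2: False
      show ?thesis
      proof (cases "lo < fst x")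
        case True
        have xI: "x \<in> I" using T1 xP True c1 c2 by simp
        have xH: "x \<in> H" using xI by (simp add: memH)
        have "tm P H x"
          apply (rule tm_in_true[OF xH, of a0 w])
          using a0 True wF c1 c2 by (auto simp: memH w_def)
        moreover have "x \<in> F" using True c1 c2 xP by (simp add: memF)
        ultimately show ?thesis by simp
      next
        case c3: False
        show ?thesis
        proof (cases "fst x = lo")
          case True
          show ?thesis
          proof (cases "x \<in> I")
            case xI: True
            have xH: "x \<in> H" using xI by (simp add: memH)
            have "\<not> tm P H x"
              by (rule tm_in_nobelow[OF xH]) (use Hge True in fastforce)
            moreover have "x \<notin> F" using xI True by (simp add: memF)
            ultimately show ?thesis by simp
          next
            case xI: False
            have xF: "x \<in> F" using xI True xP by (simp add: memF)
            have xH: "x \<notin> H" using xI xF by (simp add: memH)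
            have "tm P H x"
            proof (rule tm_out_true[OF xH])
              fix b z assume b: "b\<in>H" and z: "z\<in>P" "fst x<fst z" "fst z<fst b"
              have "fst z \<le> Suc hi" using Hle[OF b] z by simp
              then have "z \<in> F" using z True by (simp add: memF)
              then show "z \<in> H" using z by (simp add: memH)
            next
              fix b z assume "b\<in>H" "z\<in>P" "fst b<fst z" "fst z<fst x"
              then show "z \<in> H" using Hge True by fastforce
            qed
            then show ?thesis using xF by simp
          qed
        next
          case False
          then have lt: "fst x < lo" using c3 by simp
          have xF: "x \<notin> F" using lt Fge by fastforce
          have xI: "x \<notin> I" using lt rng by fastforce
          have xH: "x \<notin> H" using xF xI by (simp add: memH)
          have a0F: "a0 \<notin> F" using a0 by (simp add: memF)
          have "\<not> tm P H x"
            apply (rule tm_out_false[OF xH, of w a0])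
            using a0 a0F lt wF a0P lohi by (auto simp: memH w_def)
          then show ?thesis using xF by simp
        qed
      qed
    qed
  qed
qed

lemma case2:
  fixes P I :: "(nat\<times>nat) set" and lo hi n m :: nat and a0 :: "nat\<times>nat"
  assumes P: "P = ordsum_antichains n m" and IP: "I \<subseteq> P"
    and a0: "a0 \<in> I" "fst a0 = lo"
    and rng: "\<And>z. z\<in>I \<Longrightarrow> lo \<le> fst z \<and> fst z \<le> hi"
    and T1: "\<And>z. z\<in>P \<Longrightarrow> lo < fst z \<Longrightarrow> fst z \<le> hi \<Longrightarrow> z\<in>I"
    and hn: "Suc hi = n"
    and F: "F = {z\<in>P. fst z < lo} \<union> {z\<in>P. fst z = lo \<and> z\<notin>I}"
  shows "\<forall>x\<in>P. x\<in>F \<longleftrightarrow> tm P ({y\<in>F. fst y > fst x} \<union> {y\<in>I. fst y \<le> fst x}) x"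
proof
  fix x assume xP: "x \<in> P"
  define H where "H = {y\<in>F. fst y > fst x} \<union> {y\<in>I. fst y \<le> fst x}"
  have memH: "y\<in>H \<longleftrightarrow> (y\<in>F \<and> fst y > fst x) \<or> (y\<in>I \<and> fst y \<le> fst x)" for y
    by (simp add: H_def)
  have memF: "y\<in>F \<longleftrightarrow> y\<in>P \<and> (fst y < lo \<or> (fst y = lo \<and> y\<notin>I))" for y
    by (simp add: F) blast
  have Fle: "fst y \<le> lo" if "y \<in> F" for y using that by (auto simp: memF)
  have xn: "fst x < n" using xP by (simp add: P memP)
  show "x\<in>F \<longleftrightarrow> tm P H x"
  proof (cases "lo < fst x")
    case True
    have xF: "x \<notin> F" using True Fle by fastforce
    have xI: "x \<in> I" using T1 xP True xn hn by simp
    have xH: "x \<in> H" using xI by (simp add: memH)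
    have "\<not> tm P H x"
    proof (rule tm_in_noabove[OF xH])
      fix b assume b: "b \<in> H" "fst x < fst b"
      then show False using Fle[of b] True by (auto simp: memH)
    qed
    then show ?thesis using xF by simp
  next
    case c1: False
    show ?thesis
    proof (cases "fst x = lo")
      case True
      show ?thesis
      proof (cases "x \<in> I")
        case xI: True
        have xH: "x \<in> H" using xI by (simp add: memH)
        have "\<not> tm P H x"
        proof (rule tm_in_nobelow[OF xH])
          fix a assume a: "a \<in> H" "fst a < fst x"
          then show False using rng[of a] True by (auto simp: memH)
        qed
        moreover have "x \<notin> F" using xI True by (simp add: memF)
        ultimately show ?thesis by simp
      next
        case xI: False
        have xF: "x \<in> F" using xI True xP by (simp add: memF)
        have xH: "x \<notin> H" using xI xF by (simp add: memH)
        have "tm P H x"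
        proof (rule tm_out_true[OF xH])
          fix b z assume b: "b\<in>H" and z: "z\<in>P" "fst x<fst z" "fst z<fst b"
          then show "z \<in> H" using Fle[of b] True by (auto simp: memH)
        next
          fix b z assume b: "b\<in>H" and z: "z\<in>P" "fst b<fst z" "fst z<fst x"
          then show "z \<in> H" using rng[of b] True by (auto simp: memH)
        qed
        then show ?thesis using xF by simp
      qed
    next
      case False
      then have lt: "fst x < lo" using c1 by simp
      have xF: "x \<in> F" using lt xP by (simp add: memF)
      have xI: "x \<notin> I" using lt rng by fastforce
      have xH: "x \<notin> H" using xI by (simp add: memH)
      have "tm P H x"
      proof (rule tm_out_true[OF xH])
        fix b z assume b: "b\<in>H" and z: "z\<in>P" "fst x<fst z" "fst z<fst b"
        have "fst b \<le> lo" using b Fle[of b] lt by (auto simp: memH)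
        then have "z \<in> F" using z by (simp add: memF)
        then show "z \<in> H" using z by (simp add: memH)
      next
        fix b z assume b: "b\<in>H" and z: "z\<in>P" "fst b<fst z" "fst z<fst x"
        then show "z \<in> H" using rng[of b] lt by (auto simp: memH)
      qed
      then show ?thesis using xF by simp
    qed
  qed
qed

lemma case3:
  fixes P I :: "(nat\<times>nat) set" and lo hi n m :: nat and a0 c0 :: "nat\<times>nat"
  assumes P: "P = ordsum_antichains n m" and IP: "I \<subseteq> P"
    and a0: "a0 \<in> I" "fst a0 = lo"
    and rng: "\<And>z. z\<in>I \<Longrightarrow> lo \<le> fst z \<and> fst z \<le> hi"
    and inner: "\<And>z. z\<in>P \<Longrightarrow> lo < fst z \<Longrightarrow> fst z < hi \<Longrightarrow> z\<in>I"
    and c0: "c0 \<in> P" "fst c0 = hi" "c0 \<notin> I" and lohi: "lo < hi"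
    and F: "F = {z\<in>P. (fst z = lo \<or> fst z = hi) \<and> z\<notin>I} \<union> {z\<in>P. lo < fst z \<and> fst z < hi}"
  shows "\<forall>x\<in>P. x\<in>F \<longleftrightarrow> tm P ({y\<in>F. fst y > fst x} \<union> {y\<in>I. fst y \<le> fst x}) x"
proof
  fix x assume xP: "x \<in> P"
  define H where "H = {y\<in>F. fst y > fst x} \<union> {y\<in>I. fst y \<le> fst x}"
  have memH: "y\<in>H \<longleftrightarrow> (y\<in>F \<and> fst y > fst x) \<or> (y\<in>I \<and> fst y \<le> fst x)" for y
    by (simp add: H_def)
  have memF: "y\<in>F \<longleftrightarrow> y\<in>P \<and> (((fst y = lo \<or> fst y = hi) \<and> y\<notin>I) \<or> (lo<fst y \<and> fst y < hi))" for y
    by (simp add: F) blast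
  have a0P: "a0 \<in> P" using a0 IP by blast
  have Fle: "fst y \<le> hi" if "y \<in> F" for y using that lohi by (auto simp: memF)
  have Fge: "lo \<le> fst y" if "y \<in> F" for y using that lohi by (auto simp: memF)
  have Hle: "fst y \<le> hi" if "y \<in> H" for y using that Fle[of y] rng[of y] by (auto simp: memH)
  have Hge: "lo \<le> fst y" if "y \<in> H" for y using that Fge[of y] rng[of y] by (auto simp: memH)
  have c0F: "c0 \<in> F" using c0 by (simp add: memF)
  have a0F: "a0 \<notin> F" using a0 lohi by (simp add: memF)
  show "x\<in>F \<longleftrightarrow> tm P H x"
  proof (cases "hi < fst x")
    case True
    have xF: "x \<notin> F" using True Fle by fastforce
    have xI: "x \<notin> I" using True rng by fastforce
    have xH: "x \<notin> H" using xF xI by (simp add: memH)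
    have "\<not> tm P H x"
      apply (rule tm_out_false[OF xH, of a0 c0])
      using a0 True c0 lohi by (auto simp: memH)
    then show ?thesis using xF by simp
  next
    case c1: False
    show ?thesis
    proof (cases "fst x = hi")
      case True
      show ?thesis
      proof (cases "x \<in> I")
        case xI: True
        have xH: "x \<in> H" using xI by (simp add: memH)
        have "\<not> tm P H x"
          by (rule tm_in_noabove[OF xH]) (use Hle True in fastforce)
        moreover have "x \<notin> F" using xI True lohi by (simp add: memF)
        ultimately show ?thesis by simp
      next
        case xI: False
        have xF: "x \<in> F" using xI True xP by (simp add: memF)
        have xH: "x \<notin> H" using xI xF by (simp add: memH)
        have "tm P H x"
        proof (rule tm_out_true[OF xH])
          fix b z assume "b\<in>H" "z\<in>P" "fst x<fst z" "fst z<fst b"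
          then show "z \<in> H" using Hle True by fastforce
        next
          fix b z assume b: "b\<in>H" and z: "z\<in>P" "fst b<fst z" "fst z<fst x"
          have "lo \<le> fst b" using Hge b by blast
          then have "z \<in> I" using inner z True by simp
          then show "z \<in> H" using z by (simp add: memH)
        qed
        then show ?thesis using xF by simp
      qed
    next
      case c2: False
      show ?thesis
      proof (cases "lo < fst x")
        case True
        have xI: "x \<in> I" using inner xP True c1 c2 by simp
        have xH: "x \<in> H" using xI by (simp add: memH)
        have "tm P H x"
          apply (rule tm_in_true[OF xH, of a0 c0])
          using a0 True c0F c0 c1 c2 by (auto simp: memH)
        moreover have "x \<in> F" using True c1 c2 xP by (simp add: memF)
        ultimately show ?thesis by simp
      next
        case c3: False
        show ?thesis
        proof (cases "fst x = lo")
          case True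
          show ?thesis
          proof (cases "x \<in> I")
            case xI: True
            have xH: "x \<in> H" using xI by (simp add: memH)
            have "\<not> tm P H x"
              by (rule tm_in_nobelow[OF xH]) (use Hge True in fastforce)
            moreover have "x \<notin> F" using xI True by (simp add: memF)
            ultimately show ?thesis by simp
          next
            case xI: False
            have xF: "x \<in> F" using xI True xP by (simp add: memF)
            have xH: "x \<notin> H" using xI xF by (simp add: memH)
            have "tm P H x"
            proof (rule tm_out_true[OF xH])
              fix b z assume b: "b\<in>H" and z: "z\<in>P" "fst x<fst z" "fst z<fst b"
              have "fst z < hi" using Hle[OF b] z by simp
              then have "z \<in> F" using z True by (simp add: memF)
              then show "z \<in> H" using z by (simp add: memH)
            next
              fix b z assume "b\<in>H" "z\<in>P" "fst b<fst z" "fst z<fst x"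
              then show "z \<in> H" using Hge True by fastforce
            qed
            then show ?thesis using xF by simp
          qed
        next
          case False
          then have lt: "fst x < lo" using c3 by simp
          have xF: "x \<notin> F" using lt Fge by fastforce
          have xI: "x \<notin> I" using lt rng by fastforce
          have xH: "x \<notin> H" using xF xI by (simp add: memH)
          have "\<not> tm P H x"
            apply (rule tm_out_false[OF xH, of c0 a0])
            using a0 a0F lt c0F c0 a0P lohi by (auto simp: memH)
          then show ?thesis using xF by simp
        qed
      qed
    qed
  qed
qed



lemma SC_elem_pow: "SC_elem x = (-1::int)^(fst x)"
  by (cases "even (fst x)") (simp_all add: SC_elem_def rk_def)

lemma alt_zero: "even n \<Longrightarrow> (\<Sum>r<n. (-1::int)^r) = 0"
proof -
  assume "even n"
  then obtain k where k: "n = 2*k" by blast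
  have "(\<Sum>r<2*k. (-1::int)^r) = 0"
    by (induction k) simp_all
  then show ?thesis using k by simp
qed

lemma alt_band: "b < n \<Longrightarrow>
  (\<Sum>r<n. (-1::int)^r * (of_bool (a \<le> r \<and> r < b) + of_bool (a < r \<and> r \<le> b))) = 0"
proof (induction b)
  case 0
  have "(\<Sum>r<n. (-1::int)^r * (of_bool (a \<le> r \<and> r < 0) + of_bool (a < r \<and> r \<le> 0))) = (\<Sum>r<n. 0)"
    by (rule sum.cong) auto
  then show ?case by simp
next
  case (Suc b)
  have pt: "(-1::int)^r * (of_bool (a \<le> r \<and> r < Suc b) + of_bool (a < r \<and> r \<le> Suc b)) =
     (-1::int)^r * (of_bool (a \<le> r \<and> r < b) + of_bool (a < r \<and> r \<le> b))
     + ((if r = b then (if a \<le> b then (-1)^b else 0) else 0) + (if r = Suc b then (if a \<le> b then (-1)^(Suc b) else 0) else 0))" for r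
    by (cases "r = b"; cases "r = Suc b"; auto)
  have "(\<Sum>r<n. (-1::int)^r * (of_bool (a \<le> r \<and> r < Suc b) + of_bool (a < r \<and> r \<le> Suc b))) =
     (\<Sum>r<n. (-1::int)^r * (of_bool (a \<le> r \<and> r < b) + of_bool (a < r \<and> r \<le> b)))
     + ((\<Sum>r<n. (if r = b then (if a \<le> b then (-1)^b else 0) else 0)) + (\<Sum>r<n. (if r = Suc b then (if a \<le> b then (-1)^(Suc b) else 0) else 0)))"
    unfolding pt sum.distrib by simp
  also have "\<dots> = 0" using Suc by (simp add: sum.delta)
  finally show ?case .
qed

lemma SC_weight:
  fixes w :: "nat \<Rightarrow> int"
  assumes FP: "F \<subseteq> ordsum_antichains n m" and IP: "I \<subseteq> ordsum_antichains n m"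
    and W: "\<forall>x\<in>ordsum_antichains n m. of_bool (x\<in>F) + of_bool (x\<in>I) = w (fst x)"
  shows "SC F + SC I = int m * (\<Sum>r<n. (-1)^r * w r)"
proof -
  let ?P = "ordsum_antichains n m"
  have fin: "finite ?P" by (simp add: ordsum_antichains_def)
  have e1: "SC F = (\<Sum>x\<in>?P. if x \<in> F then SC_elem x else 0)"
    unfolding SC_def using sum.inter_restrict[OF fin, of SC_elem F] FP by (simp add: Int_absorb1)
  have e2: "SC I = (\<Sum>x\<in>?P. if x \<in> I then SC_elem x else 0)"
    unfolding SC_def using sum.inter_restrict[OF fin, of SC_elem I] IP by (simp add: Int_absorb1)
  have "SC F + SC I = (\<Sum>x\<in>?P. SC_elem x * (of_bool (x\<in>F) + of_bool (x\<in>I)))"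
    unfolding e1 e2 sum.distrib[symmetric] by (rule sum.cong) auto
  also have "\<dots> = (\<Sum>x\<in>?P. (-1)^(fst x) * w (fst x))"
    using W by (intro sum.cong) (simp_all add: SC_elem_pow)
  also have "\<dots> = (\<Sum>r<n. \<Sum>j<m. (-1)^r * w r)"
    unfolding ordsum_antichains_def sum.cartesian_product by (simp add: lessThan_atLeast0 case_prod_beta)
  also have "\<dots> = int m * (\<Sum>r<n. (-1)^r * w r)"
    by (simp add: sum_distrib_left)
  finally show ?thesis .
qed



lemma row_IC_inj:
  "(\<forall>I\<in>IC P le. rowmotion P le xs I \<in> IC P le) \<and> inj_on (rowmotion P le xs) (IC P le)"
  unfolding rowmotion_def by (rule foldr_toggle_IC_inj)

lemma SC_row:
  assumes le: "linear_extension (ordsum_antichains n m) ordsum_le xs"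
    and ev: "even n" and I: "I \<in> IC (ordsum_antichains n m) ordsum_le"
  shows "SC (rowmotion (ordsum_antichains n m) ordsum_le xs I) + SC I = 0"
proof -
  define P where "P = ordsum_antichains n m"
  define R where "R = rowmotion P ordsum_le xs I"
  have IP: "I \<subseteq> P" and Ic: "\<And>a b z. a\<in>I \<Longrightarrow> b\<in>I \<Longrightarrow> z\<in>P \<Longrightarrow> fst a < fst z \<Longrightarrow> fst z < fst b \<Longrightarrow> z\<in>I"
    using I unfolding IC_def ic_char P_def by blast+
  have RIC: "R \<in> IC P ordsum_le" using row_IC_inj I unfolding R_def P_def by blast
  have RP: "R \<subseteq> P" using RIC unfolding IC_def ic_char by blast
  have bnd: "\<forall>x\<in>P. fst x < n" by (simp add: P_def memP)
  have charR: "\<forall>x\<in>P. x\<in>R \<longleftrightarrow> tm P ({y\<in>R. fst y > fst x} \<union> {y\<in>I. fst y \<le> fst x}) x"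
    using row_char[OF le[folded P_def] I[folded P_def]] unfolding R_def by blast
  have finP: "finite P" by (simp add: P_def ordsum_antichains_def)
  have "SC R + SC I = 0"
  proof (cases "I = {}")
    case True
    have "R = P"
      by (rule char_unique[OF RP _ IP bnd charR]) (use case0[of P] True in auto)
    have "SC R + SC I = int m * (\<Sum>r<n. (-1)^r * 1)"
      by (rule SC_weight) (use \<open>R = P\<close> True P_def in auto)
    then show ?thesis using alt_zero[OF ev] by simp
  next
    case False
    have finI: "finite I" using finP IP finite_subset by blast
    define lo where "lo = Min (fst ` I)"
    define hi where "hi = Max (fst ` I)"
    have "lo \<in> fst ` I" unfolding lo_def using False finI by simp
    then obtain a0 where a0: "a0 \<in> I" "fst a0 = lo" by auto
    have "hi \<in> fst ` I" unfolding hi_def using False finI by simp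
    then obtain b0 where b0: "b0 \<in> I" "fst b0 = hi" by auto
    have rng: "lo \<le> fst z \<and> fst z \<le> hi" if "z \<in> I" for z
      unfolding lo_def hi_def using that finI by simp
    have hin: "hi < n" using b0 IP bnd by blast
    have lohi0: "lo \<le> hi" using rng[OF a0(1)] by simp
    have inner: "z \<in> I" if "z\<in>P" "lo < fst z" "fst z < hi" for z
      using Ic[OF a0(1) b0(1) that(1)] a0 b0 that by simp
    show ?thesis
    proof (cases "\<forall>z\<in>P. lo < fst z \<and> fst z \<le> hi \<longrightarrow> z \<in> I")
      case T1: True
      have T1': "\<And>z. z\<in>P \<Longrightarrow> lo < fst z \<Longrightarrow> fst z \<le> hi \<Longrightarrow> z\<in>I" using T1 by blast
      show ?thesis
      proof (cases "Suc hi < n")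
        case True
        define F where "F = {z\<in>P. fst z = lo \<and> z\<notin>I} \<union> {z\<in>P. lo < fst z \<and> fst z \<le> Suc hi}"
        have cF: "\<forall>x\<in>P. x\<in>F \<longleftrightarrow> tm P ({y\<in>F. fst y > fst x} \<union> {y\<in>I. fst y \<le> fst x}) x"
          by (rule case1[OF P_def IP a0 rng T1' True F_def])
        have "R = F" by (rule char_unique[OF RP _ IP bnd charR cF]) (simp add: F_def)
        have "SC R + SC I = int m * (\<Sum>r<n. (-1)^r * (of_bool (lo \<le> r \<and> r < Suc hi) + of_bool (lo < r \<and> r \<le> Suc hi)))"
        proof (rule SC_weight)
          show "R \<subseteq> ordsum_antichains n m" using RP P_def by simp
          show "I \<subseteq> ordsum_antichains n m" using IP P_def by simp
          show "\<forall>x\<in>ordsum_antichains n m. of_bool (x\<in>R) + of_bool (x\<in>I) =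
             (of_bool (lo \<le> fst x \<and> fst x < Suc hi) + of_bool (lo < fst x \<and> fst x \<le> Suc hi) :: int)"
          proof
            fix x assume "x \<in> ordsum_antichains n m"
            then have xP: "x \<in> P" by (simp add: P_def)
            show "of_bool (x\<in>R) + of_bool (x\<in>I) =
             (of_bool (lo \<le> fst x \<and> fst x < Suc hi) + of_bool (lo < fst x \<and> fst x \<le> Suc hi) :: int)"
              using rng[of x] T1 xP lohi0 by (cases "x \<in> I") (auto simp: \<open>R = F\<close> F_def)
          qed
        qed
        then show ?thesis using alt_band[OF True] by simp
      next
        case False
        then have hn: "Suc hi = n" using hin by simp
        define F where "F = {z\<in>P. fst z < lo} \<union> {z\<in>P. fst z = lo \<and> z\<notin>I}"
        have cF: "\<forall>x\<in>P. x\<in>F \<longleftrightarrow> tm P ({y\<in>F. fst y > fst x} \<union> {y\<in>I. fst y \<le> fst x}) x"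
          by (rule case2[OF P_def IP a0 rng T1' hn F_def])
        have "R = F" by (rule char_unique[OF RP _ IP bnd charR cF]) (simp add: F_def)
        have "SC R + SC I = int m * (\<Sum>r<n. (-1)^r * 1)"
        proof (rule SC_weight)
          show "R \<subseteq> ordsum_antichains n m" using RP P_def by simp
          show "I \<subseteq> ordsum_antichains n m" using IP P_def by simp
          show "\<forall>x\<in>ordsum_antichains n m. of_bool (x\<in>R) + of_bool (x\<in>I) = (1::int)"
          proof
            fix x assume "x \<in> ordsum_antichains n m"
            then have xP: "x \<in> P" by (simp add: P_def)
            have "fst x < n" using xP bnd by blast
            then show "of_bool (x\<in>R) + of_bool (x\<in>I) = (1::int)"
              using rng[of x] T1 xP hn lohi0 by (cases "x \<in> I") (auto simp: \<open>R = F\<close> F_def)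
          qed
        qed
        then show ?thesis using alt_zero[OF ev] by simp
      qed
    next
      case False
      then obtain c1 where c1: "c1 \<in> P" "lo < fst c1" "fst c1 \<le> hi" "c1 \<notin> I" by blast
      have c1h: "fst c1 = hi" using inner[OF c1(1) c1(2)] c1 by fastforce
      have lohi: "lo < hi" using c1 c1h by simp
      define F where "F = {z\<in>P. (fst z = lo \<or> fst z = hi) \<and> z\<notin>I} \<union> {z\<in>P. lo < fst z \<and> fst z < hi}"
      have cF: "\<forall>x\<in>P. x\<in>F \<longleftrightarrow> tm P ({y\<in>F. fst y > fst x} \<union> {y\<in>I. fst y \<le> fst x}) x"
        by (rule case3[OF P_def IP a0 rng inner c1(1) c1h c1(4) lohi F_def])
      have "R = F" by (rule char_unique[OF RP _ IP bnd charR cF]) (simp add: F_def)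
      have "SC R + SC I = int m * (\<Sum>r<n. (-1)^r * (of_bool (lo \<le> r \<and> r < hi) + of_bool (lo < r \<and> r \<le> hi)))"
      proof (rule SC_weight)
        show "R \<subseteq> ordsum_antichains n m" using RP P_def by simp
        show "I \<subseteq> ordsum_antichains n m" using IP P_def by simp
        show "\<forall>x\<in>ordsum_antichains n m. of_bool (x\<in>R) + of_bool (x\<in>I) =
           (of_bool (lo \<le> fst x \<and> fst x < hi) + of_bool (lo < fst x \<and> fst x \<le> hi) :: int)"
        proof
          fix x assume "x \<in> ordsum_antichains n m"
          then have xP: "x \<in> P" by (simp add: P_def)
          show "of_bool (x\<in>R) + of_bool (x\<in>I) =
           (of_bool (lo \<le> fst x \<and> fst x < hi) + of_bool (lo < fst x \<and> fst x \<le> hi) :: int)"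
            using rng[of x] inner[of x] xP lohi by (cases "x \<in> I") (auto simp: \<open>R = F\<close> F_def)
        qed
      qed
      then show ?thesis using alt_band[OF hin] by simp
    qed
  qed
  then show ?thesis unfolding R_def P_def .
qed

theorem theorem3p18:
  fixes m n :: nat and xs :: "(nat \<times> nat) list"
  assumes "m \<ge> 1" and "even n"
    and "linear_extension (ordsum_antichains n m) ordsum_le xs"
  shows "homomesic (IC (ordsum_antichains n m) ordsum_le)
           (rowmotion (ordsum_antichains n m) ordsum_le xs)
           (\<lambda>I. real_of_int (SC I)) 0"
  unfolding homomesic_def
proof
  fix I assume I: "I \<in> IC (ordsum_antichains n m) ordsum_le"
  define f where "f = rowmotion (ordsum_antichains n m) ordsum_le xs"
  define Orb where "Orb = orbit f I"
  have fIC: "\<forall>J\<in>IC (ordsum_antichains n m) ordsum_le. f J \<in> IC (ordsum_antichains n m) ordsum_le"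
    and finj: "inj_on f (IC (ordsum_antichains n m) ordsum_le)"
    using row_IC_inj unfolding f_def by blast+
  have pow: "(f ^^ k) I \<in> IC (ordsum_antichains n m) ordsum_le" for k
    by (induction k) (use I fIC in auto)
  have OIC: "Orb \<subseteq> IC (ordsum_antichains n m) ordsum_le"
    unfolding Orb_def orbit_def using pow by blast
  have finIC: "finite (IC (ordsum_antichains n m) ordsum_le)"
  proof (rule finite_subset)
    show "IC (ordsum_antichains n m) ordsum_le \<subseteq> Pow (ordsum_antichains n m)"
      unfolding IC_def interval_closed_def by blast
    show "finite (Pow (ordsum_antichains n m))" by (simp add: ordsum_antichains_def)
  qed
  have finO: "finite Orb" using finIC OIC finite_subset by blast
  have fO: "f ` Orb \<subseteq> Orb"
  proof
    fix J assume "J \<in> f ` Orb"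
    then obtain k where "J = f ((f ^^ k) I)" unfolding Orb_def orbit_def by blast
    then have "J = (f ^^ Suc k) I" by simp
    then show "J \<in> Orb" unfolding Orb_def orbit_def by blast
  qed
  have injO: "inj_on f Orb" using finj OIC inj_on_subset by blast
  have img: "f ` Orb = Orb" using endo_inj_surj[OF finO fO injO] .
  have "(\<Sum>J\<in>Orb. SC (f J)) = (\<Sum>J\<in>f ` Orb. SC J)" using sum.reindex[OF injO, of SC] by (simp add: comp_def)
  also have "\<dots> = (\<Sum>J\<in>Orb. SC J)" using img by simp
  finally have e1: "(\<Sum>J\<in>Orb. SC (f J)) = (\<Sum>J\<in>Orb. SC J)" .
  have "(\<Sum>J\<in>Orb. SC (f J)) = (\<Sum>J\<in>Orb. - SC J)"
  proof (rule sum.cong)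
    fix J assume "J \<in> Orb"
    then have "J \<in> IC (ordsum_antichains n m) ordsum_le" using OIC by blast
    then show "SC (f J) = - SC J" using SC_row[OF assms(3) assms(2)] unfolding f_def by smt
  qed simp
  then have "(\<Sum>J\<in>Orb. SC J) = 0" using e1 by (simp add: sum_negf)
  then have "(\<Sum>J\<in>Orb. real_of_int (SC J)) = 0" by (metis of_int_0 of_int_sum)
  then show "(\<Sum>J\<in>orbit (rowmotion (ordsum_antichains n m) ordsum_le xs) I. real_of_int (SC J)) /
       real (card (orbit (rowmotion (ordsum_antichains n m) ordsum_le xs) I)) = 0"
    unfolding Orb_def f_def by simp
qed

end
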